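(* Let $F$ be an $m\times n$ matrix, $B$ an $m\times p$ matrix and $H$ an $l\times n$ matrix. Let $x\in\mathbb{R}^n$ satisfy $Fx=Bf$ and let the observed data be $y=Hx+g\in\mathbb{R}^l$, where $(f,g)\in\mathbb{R}^p\times\mathbb{R}^l$ is deterministic and unknown, belonging to $$\mathscr G=\{(f,g):(Q_1f,f)_p+(Q_2g,g)_l\le 1\},$$ with $Q_1$ ($p\times p$) and $Q_2$ ($l\times l$) symmetric positive definite. Let $\mathscr F=\{F'z+H'u:z\in\mathbb{R}^m,u\in\mathbb{R}^l\}$ and $\ell\in\mathscr F$. Then the minimax a posteriori estimate of $\ell(x)=(\ell,x)_n$ is $$\widehat{\ell(x)}=(\ell,\hat x)_n=(Q_2Hp,y)_l,$$ and the minimax a posteriori error is $$\hat\sigma=[1-(y-H\hat x,Q_2y)_l]^{1/2}(\ell,p)_n^{1/2},$$ where $p$ (together with some $\hat z$) solves $Fp=BQ_1^{-1}B'\hat z,\ F'\hat z=\ell-H'Q_2Hp$, and $\hat x$ (together with some $\hat p$) solves $F\hat x=BQ_1^{-1}B'\hat p,\ F'\hat p=H'Q_2(y-H\hat x)$. If $\ell\notin\mathscr F$, the minimax a posteriori error is infinite.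
   Context: $(\cdot,\cdot)_k$ is the Euclidean inner product on $\mathbb{R}^k$. Set $X=\{x\in\mathbb{R}^n:\exists (f,g)\in\mathscr G \text{ with } Fx=Bf,\ y-Hx=g\}$. The minimax a posteriori estimate of $\ell(x)$ is a number $\widehat{\ell(x)}$ with $\sup_{x\in X}|\ell(x)-\widehat{\ell(x)}|=\inf_{\tilde x\in X}\sup_{x\in X}|\ell(x)-\ell(\tilde x)|$, and $\hat\sigma=\sup_{x\in X}|\ell(x)-\widehat{\ell(x)}|$ is the minimax a posteriori error. *)

theory Defs
  imports "HOL-Analysis.Analysis"
begin

definition sym_pos_def :: "real^'k^'k \<Rightarrow> bool" where
  "sym_pos_def Q \<longleftrightarrow> transpose Q = Q \<and> (\<forall>v. v \<noteq> 0 \<longrightarrow> (Q *v v) \<bullet> v > 0)"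

definition unc_set :: "real^'p^'p \<Rightarrow> real^'l^'l \<Rightarrow> ((real^'p) \<times> (real^'l)) set" where
  "unc_set Q1 Q2 = {(f, g). (Q1 *v f) \<bullet> f + (Q2 *v g) \<bullet> g \<le> 1}"

definition adm_set ::
  "real^'n^'m \<Rightarrow> real^'p^'m \<Rightarrow> real^'n^'l \<Rightarrow> real^'p^'p \<Rightarrow> real^'l^'l \<Rightarrow> real^'l \<Rightarrow> (real^'n) set" where
  "adm_set F B H Q1 Q2 y = {x. \<exists>(f, g) \<in> unc_set Q1 Q2. F *v x = B *v f \<and> y - H *v x = g}"

definition post_error ::
  "real^'n^'m \<Rightarrow> real^'p^'m \<Rightarrow> real^'n^'l \<Rightarrow> real^'p^'p \<Rightarrow> real^'l^'l \<Rightarrow> real^'l \<Rightarrow> real^'n \<Rightarrow> real \<Rightarrow> ereal" where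
  "post_error F B H Q1 Q2 y ell c = (SUP x \<in> adm_set F B H Q1 Q2 y. ereal \<bar>ell \<bullet> x - c\<bar>)"

definition is_minimax_est ::
  "real^'n^'m \<Rightarrow> real^'p^'m \<Rightarrow> real^'n^'l \<Rightarrow> real^'p^'p \<Rightarrow> real^'l^'l \<Rightarrow> real^'l \<Rightarrow> real^'n \<Rightarrow> real \<Rightarrow> bool" where
  "is_minimax_est F B H Q1 Q2 y ell c \<longleftrightarrow>
     post_error F B H Q1 Q2 y ell c =
     (INF xt \<in> adm_set F B H Q1 Q2 y. SUP x \<in> adm_set F B H Q1 Q2 y. ereal \<bar>ell \<bullet> x - ell \<bullet> xt\<bar>)"

definition est_class :: "real^'n^'m \<Rightarrow> real^'n^'l \<Rightarrow> (real^'n) set" where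
  "est_class F H = {transpose F *v z + transpose H *v u | z u. True}"

end

theory Submission
  imports Defs
begin


lemma mv_transp: "((M::real^'a^'b) *v a) \<bullet> b = a \<bullet> (transpose M *v b)"
  by (metis dot_lmul_matrix inner_commute transpose_matrix_vector)

lemma minv:
  fixes Q :: "real^'k^'k"
  assumes "sym_pos_def Q"
  shows "Q ** matrix_inv Q = mat 1" "matrix_inv Q ** Q = mat 1"
proof -
  have "\<forall>x. Q *v x = 0 \<longrightarrow> x = 0"
    using assms unfolding sym_pos_def_def by (metis inner_zero_left less_irrefl)
  then have "invertible Q" using invertible_left_inverse matrix_left_invertible_ker by blast
  then have "\<exists>A'. Q ** A' = mat 1 \<and> A' ** Q = mat 1" unfolding invertible_def .
  then have "Q ** matrix_inv Q = mat 1 \<and> matrix_inv Q ** Q = mat 1"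
    unfolding matrix_inv_def by (rule someI_ex)
  then show "Q ** matrix_inv Q = mat 1" "matrix_inv Q ** Q = mat 1" by auto
qed

lemma sym_mv: assumes "transpose Q = Q" shows "((Q::real^'k^'k) *v a) \<bullet> b = a \<bullet> (Q *v b)"
  by (metis assms mv_transp)

lemma Qinv_props:
  fixes Q :: "real^'k^'k"
  assumes "sym_pos_def Q"
  shows "(matrix_inv Q *v a) \<bullet> b = a \<bullet> (matrix_inv Q *v b)"
    "Q *v (matrix_inv Q *v a) = a"
    "(matrix_inv Q *v a) \<bullet> a \<ge> 0"
    "(matrix_inv Q *v a) \<bullet> a = 0 \<Longrightarrow> a = 0"
    "(Q *v a) \<bullet> a \<ge> 0"
proof -
  have T: "transpose Q = Q" and P: "\<And>v. v \<noteq> 0 \<Longrightarrow> (Q *v v) \<bullet> v > 0"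
    using assms unfolding sym_pos_def_def by auto
  show QQ: "\<And>a. Q *v (matrix_inv Q *v a) = a"
    by (simp add: matrix_vector_mul_assoc minv[OF assms])
  show P0: "\<And>a. (Q *v a) \<bullet> a \<ge> 0" by (metis P inner_zero_right order_le_less)
  show "(matrix_inv Q *v a) \<bullet> b = a \<bullet> (matrix_inv Q *v b)"
    by (metis QQ T sym_mv inner_commute)
  show "(matrix_inv Q *v a) \<bullet> a \<ge> 0" by (metis QQ P0 inner_commute)
  show "(matrix_inv Q *v a) \<bullet> a = 0 \<Longrightarrow> a = 0"
    by (metis QQ P inner_commute less_irrefl matrix_vector_mult_0_right)
qed

lemma not_range_orth:
  fixes T :: "'a::euclidean_space \<Rightarrow> 'b::euclidean_space"
  assumes "linear T" "b \<notin> range T"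
  shows "\<exists>r. (\<forall>x. T x \<bullet> r = 0) \<and> b \<bullet> r \<noteq> 0"
proof -
  obtain w r where w: "w \<in> span (range T)" and o: "\<And>v. v \<in> span (range T) \<Longrightarrow> orthogonal r v"
    and br: "b = w + r" using orthogonal_subspace_decomp_exists by metis
  have S: "span (range T) = range T"
    by (metis assms(1) linear_subspace_image subspace_UNIV span_eq_iff)
  have "w \<in> range T" using w unfolding S .
  then have "w \<bullet> r = 0" using o \<open>span (range T) = range T\<close>
    by (metis inner_commute orthogonal_def)
  have "r \<noteq> 0" using assms(2) br \<open>w \<in> range T\<close> by auto
  have "\<forall>x. T x \<bullet> r = 0" using o S by (metis inner_commute orthogonal_def rangeI)
  moreover have "b \<bullet> r \<noteq> 0" using \<open>r \<noteq> 0\<close> \<open>w \<bullet> r = 0\<close> br by (simp add: inner_add_left)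
  ultimately show ?thesis by blast
qed

lemma solvable_sym:
  fixes L :: "'a::euclidean_space \<Rightarrow> 'a"
  assumes "linear L" "\<And>u v. L u \<bullet> v = u \<bullet> L v" "\<And>u. L u = 0 \<Longrightarrow> b \<bullet> u = 0"
  shows "\<exists>x. L x = b"
proof (rule ccontr)
  assume "\<nexists>x. L x = b"
  then have "b \<notin> range L" by auto
  then obtain r where r: "\<forall>x. L x \<bullet> r = 0" "b \<bullet> r \<noteq> 0" using not_range_orth assms(1) by blast
  have "L r \<bullet> L r = 0" using r(1) assms(2) by metis
  then have "L r = 0" by simp
  then show False using assms(3) r(2) by blast
qed

lemma cs_disc:
  fixes a c d :: real
  assumes "\<And>t. 0 \<le> a - 2*t*c + t^2*d" "d \<ge> 0"
  shows "c^2 \<le> a*d"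
proof (cases "d = 0")
  case True
  have "c = 0"
  proof (rule ccontr)
    assume "c \<noteq> 0"
    have "0 \<le> a - 2*((a+1)/(2*c))*c" using assms(1)[of "(a+1)/(2*c)"] True by simp
    then show False using \<open>c \<noteq> 0\<close> by (simp add: field_simps)
  qed
  then show ?thesis using True by simp
next
  case False
  then have D: "d > 0" using assms(2) by simp
  have "0 \<le> a - 2*(c/d)*c + (c/d)^2*d" using assms(1) .
  also have "\<dots> = (a*d - c^2)/d" using D by (simp add: field_simps power2_eq_square)
  finally show ?thesis using D by (simp add: zero_le_divide_iff)
qed

lemma K_mv: "((B::real^'p^'m) ** (Qi::real^'p^'p) ** transpose B) *v v = B *v (Qi *v (transpose B *v v))"
  by (simp only: matrix_vector_mul_assoc matrix_mul_assoc)

lemma kernel_lemma: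
  fixes F :: "real^'n^'m" and B :: "real^'p^'m" and H :: "real^'n^'l"
    and Q1 :: "real^'p^'p" and Q2 :: "real^'l^'l"
  assumes Q1: "sym_pos_def Q1" and Q2: "sym_pos_def Q2"
    and e1: "transpose H *v (Q2 *v (H *v u)) + transpose F *v v = 0"
    and e2: "F *v u - (B ** matrix_inv Q1 ** transpose B) *v v = 0"
  shows "H *v u = 0" "F *v u = 0"
proof -
  let ?w = "transpose B *v v"
  have Fu: "F *v u = B *v (matrix_inv Q1 *v ?w)" using e2 K_mv by (metis eq_iff_diff_eq_0)
  have "0 = (transpose H *v (Q2 *v (H *v u)) + transpose F *v v) \<bullet> u" using e1 by simp
  also have "\<dots> = (Q2 *v (H *v u)) \<bullet> (H *v u) + v \<bullet> (F *v u)"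
  proof -
    have "(transpose H *v (Q2 *v (H *v u))) \<bullet> u = (Q2 *v (H *v u)) \<bullet> (H *v u)"
      using mv_transp[of H u "Q2 *v (H *v u)"] by (simp only: inner_commute)
    moreover have "(transpose F *v v) \<bullet> u = v \<bullet> (F *v u)"
      using mv_transp[of F u v] by (simp only: inner_commute)
    ultimately show ?thesis by (simp only: inner_add_left)
  qed
  also have "v \<bullet> (F *v u) = (matrix_inv Q1 *v ?w) \<bullet> ?w"
    unfolding Fu using mv_transp[of B "matrix_inv Q1 *v ?w" v] inner_commute by metis
  finally have z: "0 = (Q2 *v (H *v u)) \<bullet> (H *v u) + (matrix_inv Q1 *v ?w) \<bullet> ?w" .
  have a: "(Q2 *v (H *v u)) \<bullet> (H *v u) \<ge> 0" using Qinv_props(5)[OF Q2] .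
  have b: "(matrix_inv Q1 *v ?w) \<bullet> ?w \<ge> 0" using Qinv_props(3)[OF Q1] .
  have "(Q2 *v (H *v u)) \<bullet> (H *v u) = 0" using a b z by linarith
  then show "H *v u = 0" using Q2 unfolding sym_pos_def_def by (metis less_irrefl)
  have "(matrix_inv Q1 *v ?w) \<bullet> ?w = 0" using a b z by linarith
  then have "?w = 0" using Qinv_props(4)[OF Q1] by blast
  then show "F *v u = 0" using Fu by simp
qed

lemma exist_sol:
  fixes F :: "real^'n^'m" and B :: "real^'p^'m" and H :: "real^'n^'l"
    and Q1 :: "real^'p^'p" and Q2 :: "real^'l^'l" and b :: "real^'n"
  assumes Q1: "sym_pos_def Q1" and Q2: "sym_pos_def Q2"
    and bk: "\<And>u. H *v u = 0 \<Longrightarrow> F *v u = 0 \<Longrightarrow> b \<bullet> u = 0"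
  shows "\<exists>p zh. F *v p = (B ** matrix_inv Q1 ** transpose B) *v zh \<and>
               transpose F *v zh = b - transpose H *v (Q2 *v (H *v p))"
proof -
  define K where "K = B ** matrix_inv Q1 ** transpose B"
  define L where "L = (\<lambda>z::(real^'n) \<times> (real^'m).
     (transpose H *v (Q2 *v (H *v fst z)) + transpose F *v snd z, F *v fst z - K *v snd z))"
  have lin: "linear L"
    unfolding L_def by (rule linearI) (auto simp: algebra_simps)
  have Ks: "\<And>v w. (K *v v) \<bullet> w = v \<bullet> (K *v w)"
    unfolding K_def K_mv by (metis mv_transp Qinv_props(1)[OF Q1] inner_commute)
  have T2: "transpose Q2 = Q2" using Q2 unfolding sym_pos_def_def by auto
  have sym: "\<And>a c. L a \<bullet> c = a \<bullet> L c"
  proof -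
    fix a c :: "(real^'n) \<times> (real^'m)"
    obtain u v where a: "a = (u, v)" by fastforce
    obtain u' v' where c: "c = (u', v')" by fastforce
    have 1: "(transpose H *v (Q2 *v (H *v u))) \<bullet> u' = u \<bullet> (transpose H *v (Q2 *v (H *v u')))"
      by (metis mv_transp inner_commute sym_mv[OF T2])
    have 2: "(transpose F *v v) \<bullet> u' = v \<bullet> (F *v u')" by (metis mv_transp inner_commute)
    have 3: "(F *v u) \<bullet> v' = u \<bullet> (transpose F *v v')" by (metis mv_transp)
    show "L a \<bullet> c = a \<bullet> L c"
      unfolding a c L_def using 1 2 3 Ks[of v v']
      by (simp add: inner_add_left inner_add_right inner_diff_left inner_diff_right)
  qed
  have ker: "\<And>z. L z = 0 \<Longrightarrow> (b, 0::real^'m) \<bullet> z = 0"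
  proof -
    fix z :: "(real^'n) \<times> (real^'m)"
    assume "L z = 0"
    then have e1: "transpose H *v (Q2 *v (H *v fst z)) + transpose F *v snd z = 0"
      and e2: "F *v fst z - K *v snd z = 0" unfolding L_def by (auto simp: zero_prod_def)
    show "(b, 0::real^'m) \<bullet> z = 0"
      using kernel_lemma[OF Q1 Q2 e1 e2[unfolded K_def]] bk by (cases z) auto
  qed
  obtain z where "L z = (b, 0)" using solvable_sym[OF lin sym ker] by blast
  then have "transpose H *v (Q2 *v (H *v fst z)) + transpose F *v snd z = b"
     "F *v fst z - K *v snd z = 0" unfolding L_def by auto
  then have "F *v fst z = K *v snd z \<and> transpose F *v snd z = b - transpose H *v (Q2 *v (H *v fst z))"
    by (auto simp: algebra_simps)
  then show ?thesis unfolding K_def by blast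
qed



lemma quad_exp:
  fixes Q :: "real^'k^'k"
  assumes "transpose Q = Q"
  shows "(Q *v (a - t *\<^sub>R b)) \<bullet> (a - t *\<^sub>R b) = (Q *v a) \<bullet> a - 2*t*((Q *v a) \<bullet> b) + t^2*((Q *v b) \<bullet> b)"
proof -
  have s: "(Q *v b) \<bullet> a = (Q *v a) \<bullet> b" using sym_mv[OF assms] inner_commute by metis
  show ?thesis
    by (simp add: matrix_vector_mult_diff_distrib matrix_vector_mult_scaleR inner_diff_left
        inner_diff_right s power2_eq_square algebra_simps del: transpose_matrix_vector)
qed

lemma main_part:
  fixes F :: "real^'n^'m" and B :: "real^'p^'m" and H :: "real^'n^'l"
    and Q1 :: "real^'p^'p" and Q2 :: "real^'l^'l"
    and x :: "real^'n" and f :: "real^'p" and g :: "real^'l" and y :: "real^'l"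
    and ell :: "real^'n"
  assumes Q1: "sym_pos_def Q1" and Q2: "sym_pos_def Q2"
    and state: "F *v x = B *v f"
    and obs: "y = H *v x + g"
    and fg: "(f, g) \<in> unc_set Q1 Q2"
    and E1: "F *v p = (B ** matrix_inv Q1 ** transpose B) *v zh"
    and E2: "transpose F *v zh = ell - transpose H *v (Q2 *v (H *v p))"
    and E3: "F *v xh = (B ** matrix_inv Q1 ** transpose B) *v ph"
    and E4: "transpose F *v ph = transpose H *v (Q2 *v (y - H *v xh))"
  shows "(\<forall>c. is_minimax_est F B H Q1 Q2 y ell c \<longleftrightarrow> c = ell \<bullet> xh) \<and>
           ell \<bullet> xh = (Q2 *v (H *v p)) \<bullet> y \<and>
           post_error F B H Q1 Q2 y ell (ell \<bullet> xh) =
             ereal (sqrt (1 - (y - H *v xh) \<bullet> (Q2 *v y)) * sqrt (ell \<bullet> p))"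
proof -
  define Qi where "Qi = matrix_inv Q1"
  have T1: "transpose Q1 = Q1" and T2: "transpose Q2 = Q2"
    using Q1 Q2 unfolding sym_pos_def_def by auto
  have QQ: "\<And>a. Q1 *v (Qi *v a) = a" unfolding Qi_def using Qinv_props(2)[OF Q1] .
  have Kv: "\<And>v. (B ** matrix_inv Q1 ** transpose B) *v v = B *v (Qi *v (transpose B *v v))"
    unfolding Qi_def by (rule K_mv)
  define fh where "fh = Qi *v (transpose B *v ph)"
  define e1 where "e1 = Qi *v (transpose B *v zh)"
  define J where "J = (\<lambda>x f. (Q1 *v f) \<bullet> f + (Q2 *v (y - H *v x)) \<bullet> (y - H *v x))"
  define N where "N = (\<lambda>e d. (Q1 *v e) \<bullet> e + (Q2 *v (H *v d)) \<bullet> (H *v d))"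
  define J0 where "J0 = (y - H *v xh) \<bullet> (Q2 *v y)"
  define X where "X = adm_set F B H Q1 Q2 y"
  have Xi: "\<And>x. x \<in> X \<longleftrightarrow> (\<exists>f. F *v x = B *v f \<and> J x f \<le> 1)"
    unfolding X_def adm_set_def unc_set_def J_def by auto
  have Bfh: "B *v fh = F *v xh" unfolding fh_def E3 Kv ..
  have Be1: "B *v e1 = F *v p" unfolding e1_def E1 Kv ..
  have Nnn: "\<And>e d. N e d \<ge> 0" unfolding N_def
    using Qinv_props(5)[OF Q1] Qinv_props(5)[OF Q2] by (simp add: add_nonneg_nonneg)
  have I1: "J x f = J0 + N (f - fh) (x - xh)" if "F *v x = B *v f" for x f
  proof -
    define a where "a = y - H *v xh"
    define d where "d = x - xh"
    define e where "e = f - fh"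
    have yx: "y - H *v x = a - 1 *\<^sub>R (H *v d)" unfolding a_def d_def by (simp add: algebra_simps)
    have ff: "f = fh - (-1) *\<^sub>R e" unfolding e_def by simp
    have Q1fh: "Q1 *v fh = transpose B *v ph" unfolding fh_def QQ ..
    have A1: "(Q1 *v fh) \<bullet> fh = (Q2 *v a) \<bullet> (H *v xh)"
    proof -
      have "(Q1 *v fh) \<bullet> fh = ph \<bullet> (B *v fh)" unfolding Q1fh by (metis mv_transp inner_commute)
      also have "\<dots> = ph \<bullet> (F *v xh)" by (simp add: Bfh)
      also have "\<dots> = (transpose F *v ph) \<bullet> xh" by (metis mv_transp inner_commute)
      also have "\<dots> = (Q2 *v a) \<bullet> (H *v xh)" unfolding E4 a_def by (metis mv_transp inner_commute)
      finally show ?thesis .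
    qed
    have A2: "(Q1 *v fh) \<bullet> e = (Q2 *v a) \<bullet> (H *v d)"
    proof -
      have Be: "B *v e = F *v d" unfolding e_def d_def
        by (simp add: matrix_vector_mult_diff_distrib that Bfh)
      have "(Q1 *v fh) \<bullet> e = ph \<bullet> (B *v e)" unfolding Q1fh by (metis mv_transp inner_commute)
      also have "\<dots> = ph \<bullet> (F *v d)" by (simp add: Be)
      also have "\<dots> = (transpose F *v ph) \<bullet> d" by (metis mv_transp inner_commute)
      also have "\<dots> = (Q2 *v a) \<bullet> (H *v d)" unfolding E4 a_def by (metis mv_transp inner_commute)
      finally show ?thesis .
    qed
    have "J x f = (Q1 *v fh) \<bullet> fh - 2*(-1)*((Q1 *v fh) \<bullet> e) + (-1)^2*((Q1 *v e) \<bullet> e)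
         + ((Q2 *v a) \<bullet> a - 2*1*((Q2 *v a) \<bullet> (H *v d)) + 1^2*((Q2 *v (H *v d)) \<bullet> (H *v d)))"
      unfolding J_def yx using quad_exp[OF T1, of fh "-1" e] quad_exp[OF T2, of a 1 "H *v d"] ff
      by simp
    also have "\<dots> = (Q2 *v a) \<bullet> (H *v xh + a) + N e d"
      unfolding A1 A2 N_def by (simp add: inner_add_right)
    also have "(Q2 *v a) \<bullet> (H *v xh + a) = J0"
    proof -
      have "H *v xh + a = y" by (simp add: a_def)
      then show ?thesis unfolding J0_def a_def using sym_mv[OF T2] by metis
    qed
    finally show ?thesis unfolding e_def d_def .
  qed
  have I2: "ell \<bullet> d = (Q1 *v e1) \<bullet> e + (Q2 *v (H *v p)) \<bullet> (H *v d)" if "B *v e = F *v d" for e d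
  proof -
    have "(Q1 *v e1) \<bullet> e = zh \<bullet> (B *v e)" unfolding e1_def QQ by (metis mv_transp inner_commute)
    also have "\<dots> = zh \<bullet> (F *v d)" by (simp add: that)
    also have "\<dots> = (transpose F *v zh) \<bullet> d" by (metis mv_transp inner_commute)
    also have "\<dots> = ell \<bullet> d - (Q2 *v (H *v p)) \<bullet> (H *v d)"
      unfolding E2 inner_diff_left using mv_transp[of H d "Q2 *v (H *v p)"] inner_commute by metis
    finally show ?thesis by simp
  qed
  have I3: "N e1 p = ell \<bullet> p" unfolding N_def using I2[OF Be1] by simp
  have lp: "ell \<bullet> p \<ge> 0" using I3 Nnn by metis
  have CS: "(ell \<bullet> d)^2 \<le> (ell \<bullet> p) * N e d" if "B *v e = F *v d" for e d
  proof (rule cs_disc)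
    show "N e d \<ge> 0" by (rule Nnn)
    fix t :: real
    have "0 \<le> N (e1 - t *\<^sub>R e) (p - t *\<^sub>R d)" by (rule Nnn)
    also have "\<dots> = N e1 p - 2*t*((Q1 *v e1) \<bullet> e + (Q2 *v (H *v p)) \<bullet> (H *v d)) + t^2 * N e d"
    proof -
      have Hd: "H *v (p - t *\<^sub>R d) = H *v p - t *\<^sub>R (H *v d)"
        by (simp only: matrix_vector_mult_diff_distrib matrix_vector_mult_scaleR)
      show ?thesis
        unfolding N_def Hd quad_exp[OF T1, of e1 t e] quad_exp[OF T2, of "H *v p" t "H *v d"]
        by (simp only: ring_distribs)
    qed
    finally show "0 \<le> ell \<bullet> p - 2*t*(ell \<bullet> d) + t^2 * N e d" unfolding I3 I2[OF that, symmetric] .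
  qed
  have J0le: "J0 \<le> 1"
  proof -
    have "J x f \<le> 1" using fg obs unfolding unc_set_def J_def by auto
    then show ?thesis using I1[OF state] Nnn[of "f - fh" "x - xh"] by linarith
  qed
  define R where "R = sqrt (1 - J0) * sqrt (ell \<bullet> p)"
  define c0 where "c0 = ell \<bullet> xh"
  have Rsq: "R = sqrt ((1 - J0) * (ell \<bullet> p))" unfolding R_def by (simp add: real_sqrt_mult)
  have R0: "R \<ge> 0" unfolding R_def using J0le lp by simp
  have UB: "\<bar>ell \<bullet> x - c0\<bar> \<le> R" if "x \<in> X" for x
  proof -
    have "\<exists>f. F *v x = B *v f \<and> J x f \<le> 1" using that by (simp only: Xi)
    then obtain f where f: "F *v x = B *v f" "J x f \<le> 1" by blast
    have Be: "B *v (f - fh) = F *v (x - xh)" using f(1) Bfh by (simp add: matrix_vector_mult_diff_distrib)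
    have Nl: "N (f - fh) (x - xh) \<le> 1 - J0" using I1[OF f(1)] f(2) by linarith
    have B2: "(ell \<bullet> p) * N (f - fh) (x - xh) \<le> (ell \<bullet> p) * (1 - J0)"
      by (rule mult_left_mono[OF Nl lp])
    have "(ell \<bullet> (x - xh))^2 \<le> (ell \<bullet> p) * (1 - J0)"
      using CS[OF Be] B2 by linarith
    then have "(ell \<bullet> (x - xh))^2 \<le> (1 - J0) * (ell \<bullet> p)" by (simp only: mult.commute)
    then have "sqrt ((ell \<bullet> (x - xh))^2) \<le> R" unfolding Rsq by (rule real_sqrt_le_mono)
    then show ?thesis by (simp add: c0_def inner_diff_right)
  qed
  define t where "t = sqrt (1 - J0) / sqrt (ell \<bullet> p)"
  have pts: "xh + s *\<^sub>R p \<in> X \<and> ell \<bullet> (xh + s *\<^sub>R p) = c0 + s * (ell \<bullet> p)" if "s = t \<or> s = -t" for s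
  proof
    have s2: "s^2 = t^2" using that by auto
    have F1: "F *v (xh + s *\<^sub>R p) = B *v (fh + s *\<^sub>R e1)"
      by (simp add: matrix_vector_right_distrib matrix_vector_mult_scaleR Bfh Be1)
    have "N (fh + s *\<^sub>R e1 - fh) (xh + s *\<^sub>R p - xh) = N (0 - (-s) *\<^sub>R e1) (0 - (-s) *\<^sub>R p)"
      by simp
    also have "\<dots> = s^2 * N e1 p"
      unfolding N_def using quad_exp[OF T1, of 0 "-s" e1] quad_exp[OF T2, of 0 "-s" "H *v p"]
      by (simp add: matrix_vector_mult_diff_distrib matrix_vector_mult_scaleR algebra_simps power2_eq_square del: transpose_matrix_vector)
    finally have Jeq: "J (xh + s *\<^sub>R p) (fh + s *\<^sub>R e1) = J0 + t^2 * (ell \<bullet> p)"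
      using I1[OF F1] s2 I3 by simp
    have tle: "t^2 * (ell \<bullet> p) \<le> 1 - J0"
    proof (cases "ell \<bullet> p = 0")
      case True then show ?thesis using J0le by simp
    next
      case False then show ?thesis using lp J0le unfolding t_def by (simp add: power_divide)
    qed
    have "J (xh + s *\<^sub>R p) (fh + s *\<^sub>R e1) \<le> 1" using Jeq tle by linarith
    then show "xh + s *\<^sub>R p \<in> X" unfolding Xi using F1 by blast
    show "ell \<bullet> (xh + s *\<^sub>R p) = c0 + s * (ell \<bullet> p)" by (simp add: c0_def inner_add_right)
  qed
  have tR: "t * (ell \<bullet> p) = R"
  proof -
    have "t * (ell \<bullet> p) = sqrt (1 - J0) * ((ell \<bullet> p) / sqrt (ell \<bullet> p))"
      unfolding t_def by (simp add: mult.commute)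
    then show ?thesis unfolding R_def real_div_sqrt[OF lp] .
  qed
  obtain xp xm where xp: "xp \<in> X" "ell \<bullet> xp = c0 + R" and xm: "xm \<in> X" "ell \<bullet> xm = c0 - R"
    using pts[of t] pts[of "-t"] tR by auto
  have PE: "post_error F B H Q1 Q2 y ell c = (SUP x \<in> X. ereal \<bar>ell \<bullet> x - c\<bar>)" for c
    unfolding post_error_def X_def ..
  have PE0: "post_error F B H Q1 Q2 y ell c0 = ereal R"
    unfolding PE
  proof (rule antisym)
    show "(SUP x \<in> X. ereal \<bar>ell \<bullet> x - c0\<bar>) \<le> ereal R"
      by (rule SUP_least) (use UB in auto)
    show "ereal R \<le> (SUP x \<in> X. ereal \<bar>ell \<bullet> x - c0\<bar>)"
      by (rule SUP_upper2[OF xp(1)]) (simp add: xp(2) R0)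
  qed
  have PEc: "ereal (R + \<bar>c - c0\<bar>) \<le> post_error F B H Q1 Q2 y ell c" for c
    unfolding PE
  proof (cases "c \<le> c0")
    case True
    show "ereal (R + \<bar>c - c0\<bar>) \<le> (SUP x \<in> X. ereal \<bar>ell \<bullet> x - c\<bar>)"
      by (rule SUP_upper2[OF xp(1)]) (use True R0 xp(2) in auto)
  next
    case False
    show "ereal (R + \<bar>c - c0\<bar>) \<le> (SUP x \<in> X. ereal \<bar>ell \<bullet> x - c\<bar>)"
      by (rule SUP_upper2[OF xm(1)]) (use False R0 xm(2) in auto)
  qed
  have xhX: "xh \<in> X"
  proof -
    have "J xh fh = J0" using I1[OF Bfh[symmetric]] by (simp add: N_def)
    then show ?thesis unfolding Xi using Bfh J0le by (metis order_refl)
  qed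
  have INF: "(INF xt \<in> X. SUP x \<in> X. ereal \<bar>ell \<bullet> x - ell \<bullet> xt\<bar>) = ereal R"
  proof (rule antisym)
    show "(INF xt \<in> X. SUP x \<in> X. ereal \<bar>ell \<bullet> x - ell \<bullet> xt\<bar>) \<le> ereal R"
      by (rule INF_lower2[OF xhX]) (metis PE0 PE c0_def order_refl)
    show "ereal R \<le> (INF xt \<in> X. SUP x \<in> X. ereal \<bar>ell \<bullet> x - ell \<bullet> xt\<bar>)"
    proof (rule INF_greatest)
      fix xt assume "xt \<in> X"
      have "ereal R \<le> ereal (R + \<bar>ell \<bullet> xt - c0\<bar>)" by simp
      also have "\<dots> \<le> (SUP x \<in> X. ereal \<bar>ell \<bullet> x - ell \<bullet> xt\<bar>)" using PEc[of "ell \<bullet> xt"] PE by metis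
      finally show "ereal R \<le> (SUP x \<in> X. ereal \<bar>ell \<bullet> x - ell \<bullet> xt\<bar>)" .
    qed
  qed
  have MM: "is_minimax_est F B H Q1 Q2 y ell c \<longleftrightarrow> c = ell \<bullet> xh" for c
  proof
    assume "is_minimax_est F B H Q1 Q2 y ell c"
    then have "post_error F B H Q1 Q2 y ell c = ereal R"
      unfolding is_minimax_est_def INF[unfolded X_def] .
    then have "R + \<bar>c - c0\<bar> \<le> R" using PEc[of c] by simp
    then show "c = ell \<bullet> xh" unfolding c0_def by simp
  next
    assume "c = ell \<bullet> xh"
    then show "is_minimax_est F B H Q1 Q2 y ell c"
      unfolding is_minimax_est_def INF[unfolded X_def] using PE0 c0_def by simp
  qed
  have EST: "ell \<bullet> xh = (Q2 *v (H *v p)) \<bullet> y"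
  proof -
    have "ell \<bullet> xh = (Q1 *v e1) \<bullet> fh + (Q2 *v (H *v p)) \<bullet> (H *v xh)" using I2[OF Bfh] .
    also have "(Q1 *v e1) \<bullet> fh = (Q1 *v fh) \<bullet> e1" using sym_mv[OF T1] inner_commute by metis
    also have "\<dots> = ph \<bullet> (B *v e1)" unfolding fh_def QQ by (metis mv_transp inner_commute)
    also have "\<dots> = ph \<bullet> (F *v p)" by (simp add: Be1)
    also have "\<dots> = (transpose F *v ph) \<bullet> p" by (metis mv_transp inner_commute)
    also have "\<dots> = (Q2 *v (y - H *v xh)) \<bullet> (H *v p)" unfolding E4 by (metis mv_transp inner_commute)
    also have "\<dots> = (Q2 *v (H *v p)) \<bullet> y - (Q2 *v (H *v p)) \<bullet> (H *v xh)"
    proof -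
      have "(Q2 *v (y - H *v xh)) \<bullet> (H *v p) = (Q2 *v (H *v p)) \<bullet> (y - H *v xh)"
        using sym_mv[OF T2, of "y - H *v xh" "H *v p"] inner_commute by metis
      then show ?thesis by (simp only: inner_diff_right)
    qed
    finally show ?thesis by simp
  qed
  show ?thesis using MM EST PE0 unfolding R_def J0_def c0_def by simp
qed


lemma inf_part:
  fixes F :: "real^'n^'m" and B :: "real^'p^'m" and H :: "real^'n^'l"
    and Q1 :: "real^'p^'p" and Q2 :: "real^'l^'l"
    and x :: "real^'n" and f :: "real^'p" and g :: "real^'l" and y :: "real^'l"
    and ell :: "real^'n"
  assumes state: "F *v x = B *v f"
    and obs: "y = H *v x + g"
    and fg: "(f, g) \<in> unc_set Q1 Q2"
    and nl: "ell \<notin> est_class F H"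
  shows "post_error F B H Q1 Q2 y ell c = \<infinity>"
proof -
  define T where "T = (\<lambda>z::(real^'m)\<times>(real^'l). transpose F *v fst z + transpose H *v snd z)"
  have lin: "linear T" unfolding T_def by (rule linearI) (auto simp: algebra_simps)
  have "ell \<notin> range T" using nl unfolding est_class_def T_def by auto
  then obtain r where r: "\<forall>z. T z \<bullet> r = 0" "ell \<bullet> r \<noteq> 0" using not_range_orth[OF lin] by blast
  have Fr: "F *v r = 0"
  proof -
    have "T (F *v r, 0) \<bullet> r = 0" using r(1) by blast
    then have "(transpose F *v (F *v r)) \<bullet> r = 0" unfolding T_def by simp
    then have "(F *v r) \<bullet> (F *v r) = 0" by (metis mv_transp inner_commute)
    then show ?thesis by simp
  qed
  have Hr: "H *v r = 0"
  proof -
    have "T (0, H *v r) \<bullet> r = 0" using r(1) by blast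
    then have "(transpose H *v (H *v r)) \<bullet> r = 0" unfolding T_def by simp
    then have "(H *v r) \<bullet> (H *v r) = 0" by (metis mv_transp inner_commute)
    then show ?thesis by simp
  qed
  have mem: "x + s *\<^sub>R r \<in> adm_set F B H Q1 Q2 y" for s
  proof -
    have "F *v (x + s *\<^sub>R r) = B *v f" using state Fr
      by (simp add: matrix_vector_right_distrib matrix_vector_mult_scaleR)
    moreover have "y - H *v (x + s *\<^sub>R r) = g" using obs Hr
      by (simp add: matrix_vector_right_distrib matrix_vector_mult_scaleR)
    ultimately show ?thesis unfolding adm_set_def using fg by blast
  qed
  show ?thesis unfolding post_error_def
  proof (rule SUP_PInfty)
    fix n :: nat
    define s where "s = (real n + \<bar>ell \<bullet> x - c\<bar>) / (ell \<bullet> r)"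
    have "s * (ell \<bullet> r) = real n + \<bar>ell \<bullet> x - c\<bar>" unfolding s_def using r(2) by simp
    then have "real n \<le> \<bar>ell \<bullet> (x + s *\<^sub>R r) - c\<bar>"
      by (simp add: inner_add_right)
    then show "\<exists>i\<in>adm_set F B H Q1 Q2 y. ereal (real n) \<le> ereal \<bar>ell \<bullet> i - c\<bar>"
      using mem by auto
  qed
qed

theorem mainTheorem2:
  fixes F :: "real^'n^'m" and B :: "real^'p^'m" and H :: "real^'n^'l"
    and Q1 :: "real^'p^'p" and Q2 :: "real^'l^'l"
    and x :: "real^'n" and f :: "real^'p" and g :: "real^'l" and y :: "real^'l"
    and ell :: "real^'n"
  assumes Q1: "sym_pos_def Q1" and Q2: "sym_pos_def Q2"
    and state: "F *v x = B *v f"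
    and obs: "y = H *v x + g"
    and fg: "(f, g) \<in> unc_set Q1 Q2"
  shows
   "(ell \<in> est_class F H \<longrightarrow>
      (\<exists>p zh. F *v p = (B ** matrix_inv Q1 ** transpose B) *v zh \<and>
               transpose F *v zh = ell - transpose H *v (Q2 *v (H *v p))) \<and>
      (\<exists>xh ph. F *v xh = (B ** matrix_inv Q1 ** transpose B) *v ph \<and>
               transpose F *v ph = transpose H *v (Q2 *v (y - H *v xh))) \<and>
      (\<forall>p zh xh ph.
         F *v p = (B ** matrix_inv Q1 ** transpose B) *v zh \<and>
         transpose F *v zh = ell - transpose H *v (Q2 *v (H *v p)) \<and>
         F *v xh = (B ** matrix_inv Q1 ** transpose B) *v ph \<and>
         transpose F *v ph = transpose H *v (Q2 *v (y - H *v xh)) \<longrightarrow>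
           (\<forall>c. is_minimax_est F B H Q1 Q2 y ell c \<longleftrightarrow> c = ell \<bullet> xh) \<and>
           ell \<bullet> xh = (Q2 *v (H *v p)) \<bullet> y \<and>
           post_error F B H Q1 Q2 y ell (ell \<bullet> xh) =
             ereal (sqrt (1 - (y - H *v xh) \<bullet> (Q2 *v y)) * sqrt (ell \<bullet> p))))
    \<and> (ell \<notin> est_class F H \<longrightarrow> (\<forall>c. post_error F B H Q1 Q2 y ell c = \<infinity>))"
proof -
  have P1: "\<exists>p zh. F *v p = (B ** matrix_inv Q1 ** transpose B) *v zh \<and>
               transpose F *v zh = ell - transpose H *v (Q2 *v (H *v p))"
    if ec: "ell \<in> est_class F H"
  proof -
    obtain z w where ellz: "ell = transpose F *v z + transpose H *v w"
      using ec unfolding est_class_def by blast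
    show ?thesis
    proof (rule exist_sol[OF Q1 Q2])
      fix u assume "H *v u = 0" "F *v u = 0"
      then show "ell \<bullet> u = 0" unfolding ellz inner_add_left
        by (metis mv_transp inner_commute inner_zero_right add_0)
    qed
  qed
  have P2: "\<exists>xh ph. F *v xh = (B ** matrix_inv Q1 ** transpose B) *v ph \<and>
               transpose F *v ph = transpose H *v (Q2 *v (y - H *v xh))"
  proof -
    have "\<exists>p zh. F *v p = (B ** matrix_inv Q1 ** transpose B) *v zh \<and>
         transpose F *v zh = transpose H *v (Q2 *v y) - transpose H *v (Q2 *v (H *v p))"
    proof (rule exist_sol[OF Q1 Q2])
      fix u assume "H *v u = 0" "F *v u = 0"
      then show "(transpose H *v (Q2 *v y)) \<bullet> u = 0"
        by (metis mv_transp inner_commute inner_zero_right)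
    qed
    then show ?thesis by (simp only: matrix_vector_mult_diff_distrib)
  qed
  have P3: "\<forall>p zh xh ph.
         F *v p = (B ** matrix_inv Q1 ** transpose B) *v zh \<and>
         transpose F *v zh = ell - transpose H *v (Q2 *v (H *v p)) \<and>
         F *v xh = (B ** matrix_inv Q1 ** transpose B) *v ph \<and>
         transpose F *v ph = transpose H *v (Q2 *v (y - H *v xh)) \<longrightarrow>
           (\<forall>c. is_minimax_est F B H Q1 Q2 y ell c \<longleftrightarrow> c = ell \<bullet> xh) \<and>
           ell \<bullet> xh = (Q2 *v (H *v p)) \<bullet> y \<and>
           post_error F B H Q1 Q2 y ell (ell \<bullet> xh) =
             ereal (sqrt (1 - (y - H *v xh) \<bullet> (Q2 *v y)) * sqrt (ell \<bullet> p))"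
    using main_part[OF Q1 Q2 state obs fg] by blast
  have P4: "ell \<notin> est_class F H \<longrightarrow> (\<forall>c. post_error F B H Q1 Q2 y ell c = \<infinity>)"
    using inf_part[OF state obs fg] by blast
  show ?thesis using P1 P2 P3 P4 by blast
qed

end
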